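(* Let $X$ be a topological space and $f\colon X\to\mathbb{R}^d$ an injective function. Suppose that the image $f(X)$ is not contained in an affine line in $\mathbb{R}^d$. Then $\alpha(f)=0$ if and only if $f$ is continuous.
   Context: $\mathrm{Conf}_2(X)=\{(x,y)\in X\times X: x\neq y\}$ with the subspace topology. $S^{d-1}$ carries the geodesic metric $d(u,v)=\arccos\langle u,v\rangle$. For a topological space $X$ and a metric space $Y$, $\delta(g)=\inf\{\delta\ge 0 : \text{for every } x\in X \text{ there is an open neighborhood } U_x \text{ of } x \text{ with } \operatorname{diam}(g(U_x))\le\delta\}$. For injective $f\colon X\to\mathbb{R}^d$, $\Phi_f\colon\mathrm{Conf}_2(X)\to S^{d-1}$, $\Phi_f(x,y)=\frac{f(x)-f(y)}{\|f(x)-f(y)\|}$, and $\alpha(f)=\delta(\Phi_f)$. *)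

theory Defs
  imports "HOL-Analysis.Analysis"
begin

definition conf2 :: "'a topology \<Rightarrow> ('a \<times> 'a) topology" where
  "conf2 X = subtopology (prod_topology X X) {(x, y). x \<noteq> y}"

definition sphere_dist :: "'b::real_inner \<Rightarrow> 'b \<Rightarrow> real" where
  "sphere_dist u v = arccos (inner u v)"

definition sphere_diam :: "'b::real_inner set \<Rightarrow> real" where
  "sphere_diam S = (SUP p\<in>S \<times> S. sphere_dist (fst p) (snd p))"

definition delta :: "'c topology \<Rightarrow> ('c \<Rightarrow> 'b::real_inner) \<Rightarrow> real" where
  "delta T g = Inf {d. d \<ge> 0 \<and> (\<forall>x\<in>topspace T. \<exists>U. openin T U \<and> x \<in> U \<and> sphere_diam (g ` U) \<le> d)}"

definition Phi :: "('a \<Rightarrow> 'b::real_normed_vector) \<Rightarrow> 'a \<times> 'a \<Rightarrow> 'b" where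
  "Phi f p = (f (fst p) - f (snd p)) /\<^sub>R norm (f (fst p) - f (snd p))"

definition alpha :: "'a topology \<Rightarrow> ('a \<Rightarrow> 'b::euclidean_space) \<Rightarrow> real" where
  "alpha X f = delta (conf2 X) (Phi f)"

end

theory Submission
  imports Defs
begin


lemma cm_scaleR [continuous_intros]:
  fixes g :: "'a \<Rightarrow> 'b::real_normed_vector"
  shows "continuous_map X euclidean f \<Longrightarrow> continuous_map X euclidean g \<Longrightarrow>
   continuous_map X euclidean (\<lambda>x. f x *\<^sub>R g x)"
  by (simp add: continuous_map_atin tendsto_scaleR)

lemma cm_inner [continuous_intros]:
  fixes f g :: "'a \<Rightarrow> 'b::real_inner"
  shows "continuous_map X euclidean f \<Longrightarrow> continuous_map X euclidean g \<Longrightarrow>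
   continuous_map X euclidean (\<lambda>x. inner (f x) (g x))"
  by (simp add: continuous_map_atin tendsto_inner)

lemma unit_inner_bounds:
  fixes u v :: "'b::real_inner"
  assumes "norm u = 1" "norm v = 1"
  shows "-1 \<le> inner u v" "inner u v \<le> 1"
proof -
  have "\<bar>inner u v\<bar> \<le> 1" using Cauchy_Schwarz_ineq2[of u v] assms by simp
  then show "-1 \<le> inner u v" "inner u v \<le> 1" by auto
qed

lemma unit_dist_sq:
  fixes u v :: "'b::real_inner"
  assumes "norm u = 1" "norm v = 1"
  shows "(norm (u - v))\<^sup>2 = 2 - 2 * inner u v"
proof -
  have "(norm (u - v))\<^sup>2 = inner u u - 2 * inner u v + inner v v"
    by (simp add: power2_norm_eq_inner inner_diff inner_commute)
  also have "inner u u = 1" using assms by (simp add: dot_square_norm)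
  also have "inner v v = 1" using assms by (simp add: dot_square_norm)
  finally show ?thesis by simp
qed

lemma arccos_small_iff:
  fixes u v :: "'b::real_inner"
  assumes "norm u = 1" "norm v = 1" "0 \<le> e" "e \<le> pi"
  shows "arccos (inner u v) \<le> e \<longleftrightarrow> (norm (u - v))\<^sup>2 \<le> 2 - 2 * cos e"
proof -
  note b = unit_inner_bounds[OF assms(1,2)]
  have "arccos (inner u v) \<le> e \<longleftrightarrow> cos e \<le> inner u v"
  proof
    assume h: "arccos (inner u v) \<le> e"
    have "cos e \<le> cos (arccos (inner u v))"
      by (rule cos_monotone_0_pi_le) (use h assms b arccos_lbound in auto)
    then show "cos e \<le> inner u v" using b by simp
  next
    assume h: "cos e \<le> inner u v"
    have "arccos (inner u v) \<le> arccos (cos e)"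
      by (rule arccos_le_arccos) (use h b in auto)
    then show "arccos (inner u v) \<le> e" using arccos_cos assms by simp
  qed
  then show ?thesis using unit_dist_sq[OF assms(1,2)] by simp
qed

lemma diam_le_iff:
  fixes A :: "'b::real_inner set"
  assumes "A \<noteq> {}" "\<And>u. u \<in> A \<Longrightarrow> norm u = 1"
  shows "sphere_diam A \<le> d \<longleftrightarrow> (\<forall>u\<in>A. \<forall>v\<in>A. arccos (inner u v) \<le> d)"
proof -
  have bdd: "bdd_above ((\<lambda>p. sphere_dist (fst p) (snd p)) ` (A \<times> A))"
  proof (rule bdd_aboveI2)
    fix p assume "p \<in> A \<times> A"
    then have "norm (fst p) = 1" "norm (snd p) = 1" using assms(2) by auto
    then show "sphere_dist (fst p) (snd p) \<le> pi"
      unfolding sphere_dist_def by (intro arccos_ubound unit_inner_bounds)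
  qed
  have ne: "A \<times> A \<noteq> {}" using assms(1) by simp
  show ?thesis unfolding sphere_diam_def
    using cSUP_le_iff[OF ne bdd] by (simp add: sphere_dist_def)
qed

lemma norm_Phi: "f (fst p) \<noteq> f (snd p) \<Longrightarrow> norm (Phi f p) = 1"
  by (simp add: Phi_def)

lemma topspace_conf2: "topspace (conf2 X) = {(x,y). x \<in> topspace X \<and> y \<in> topspace X \<and> x \<noteq> y}"
  by (auto simp: conf2_def)

lemma cm_nbhd:
  assumes "continuous_map T euclidean g" "p \<in> topspace T" "open V" "g p \<in> V"
  shows "\<exists>U. openin T U \<and> p \<in> U \<and> (\<forall>q\<in>U. g q \<in> V)"
proof -
  have "openin T {q \<in> topspace T. g q \<in> V}"
    using assms(1,3) by (intro openin_continuous_map_preimage) auto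
  then show ?thesis using assms(2,4) by blast
qed

lemma alpha_zero_iff:
  fixes f :: "'a \<Rightarrow> 'b::euclidean_space"
  assumes inj: "inj_on f (topspace X)"
  shows "alpha X f = 0 \<longleftrightarrow> continuous_map (conf2 X) euclidean (Phi f)"
proof -
  define T where "T = conf2 X"
  define D where "D = {d. d \<ge> 0 \<and> (\<forall>x\<in>topspace T. \<exists>U. openin T U \<and> x \<in> U \<and> sphere_diam (Phi f ` U) \<le> d)}"
  have alpha: "alpha X f = Inf D" unfolding alpha_def delta_def D_def T_def by simp
  have unit: "norm (Phi f p) = 1" if "p \<in> topspace T" for p
  proof -
    obtain a b where ab: "p = (a,b)" by (cases p)
    with that have "a \<in> topspace X" "b \<in> topspace X" "a \<noteq> b" by (auto simp: T_def topspace_conf2)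
    then have "f a \<noteq> f b" using inj by (meson inj_onD)
    then show ?thesis using ab by (simp add: norm_Phi)
  qed
  have diam: "sphere_diam (Phi f ` U) \<le> d \<longleftrightarrow> (\<forall>p\<in>U. \<forall>q\<in>U. arccos (inner (Phi f p) (Phi f q)) \<le> d)"
    if "openin T U" "U \<noteq> {}" for U d
  proof -
    have "U \<subseteq> topspace T" using that(1) by (rule openin_subset)
    then have "\<And>u. u \<in> Phi f ` U \<Longrightarrow> norm u = 1" using unit by blast
    moreover have "Phi f ` U \<noteq> {}" using that(2) by simp
    ultimately show ?thesis using diam_le_iff[of "Phi f ` U" d] by simp
  qed
  have bdd: "bdd_below D" unfolding D_def bdd_below_def by auto
  have piD: "pi \<in> D"
  proof -
    have "sphere_diam (Phi f ` topspace T) \<le> pi" if "x \<in> topspace T" for x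
    proof (subst diam)
      show "openin T (topspace T)" "topspace T \<noteq> {}" using that by auto
      show "\<forall>p\<in>topspace T. \<forall>q\<in>topspace T. arccos (Phi f p \<bullet> Phi f q) \<le> pi"
        by (intro ballI arccos_ubound unit_inner_bounds unit)
    qed
    then show ?thesis unfolding D_def mem_Collect_eq
      using pi_ge_zero openin_topspace by blast
  qed
  have Dne: "D \<noteq> {}" using piD by blast
  have D0: "Inf D \<ge> 0" by (rule cInf_greatest[OF Dne]) (simp add: D_def)
  show ?thesis
  proof
    assume a: "alpha X f = 0"
    show "continuous_map (conf2 X) euclidean (Phi f)"
      unfolding continuous_map_eq_topcontinuous_at topcontinuous_at_def T_def[symmetric]
    proof (intro ballI conjI allI impI)
      fix p assume p: "p \<in> topspace T"
      show "p \<in> topspace T" using p .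
      show "Phi f \<in> topspace T \<rightarrow> topspace euclidean" by simp
      fix V :: "'b set" assume V: "openin euclidean V \<and> Phi f p \<in> V"
      then obtain r0 where r0: "r0 > 0" "ball (Phi f p) r0 \<subseteq> V"
        by (meson open_contains_ball open_openin)
      define r where "r = min r0 1"
      have r: "r > 0" "r \<le> 1" "ball (Phi f p) r \<subseteq> V" using r0 by (auto simp: r_def)
      define t where "t = 1 - r\<^sup>2 / 4"
      have t: "-1 \<le> t" "t < 1"
      proof -
        have "r\<^sup>2 \<le> 1" using r by (simp add: power_le_one)
        then show "-1 \<le> t" unfolding t_def by simp
        show "t < 1" unfolding t_def using r by simp
      qed
      define e where "e = arccos t"
      have e: "0 < e" "e \<le> pi" "cos e = t"
      proof -
        show "e \<le> pi" "cos e = t" using t arccos_ubound by (auto simp: e_def)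
        have "0 \<le> e" using t arccos_lbound by (auto simp: e_def)
        moreover have "e \<noteq> 0" using \<open>cos e = t\<close> t by auto
        ultimately show "0 < e" by simp
      qed
      have "Inf D < e" using a alpha e by simp
      then obtain d where d: "d \<in> D" "d < e" using cInf_lessD[of D e] piD by blast
      then obtain U where U: "openin T U" "p \<in> U" "sphere_diam (Phi f ` U) \<le> d"
        using p unfolding D_def by blast
      have "\<forall>q\<in>U. Phi f q \<in> V"
      proof
        fix q assume q: "q \<in> U"
        have "arccos (inner (Phi f p) (Phi f q)) \<le> e"
        proof -
          have "U \<noteq> {}" using U(2) by blast
          then have "\<forall>p\<in>U. \<forall>q\<in>U. arccos (inner (Phi f p) (Phi f q)) \<le> d"
            using diam[OF U(1)] U(3) by blast
          then have "arccos (inner (Phi f p) (Phi f q)) \<le> d" using U(2) q by blast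
          then show ?thesis using d(2) by linarith
        qed
        moreover have pq: "p \<in> topspace T" "q \<in> topspace T" using U q openin_subset by auto
        ultimately have "(norm (Phi f p - Phi f q))\<^sup>2 \<le> 2 - 2 * cos e"
          using arccos_small_iff[OF unit unit, of p q e] e by simp
        also have "\<dots> < r\<^sup>2"
        proof -
          have "2 - 2 * cos e = r\<^sup>2 / 2" unfolding e(3) t_def by simp
          moreover have "r\<^sup>2 > 0" using r(1) by simp
          ultimately show ?thesis by linarith
        qed
        finally have n2: "(norm (Phi f p - Phi f q))\<^sup>2 < r\<^sup>2" .
        have "norm (Phi f p - Phi f q) < r" using power2_less_imp_less[OF n2] r(1) by simp
        then show "Phi f q \<in> V" using r(3) by (auto simp: dist_norm)
      qed
      then show "\<exists>U. openin T U \<and> p \<in> U \<and> (\<forall>y\<in>U. Phi f y \<in> V)" using U by blast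
    qed
  next
    assume c: "continuous_map (conf2 X) euclidean (Phi f)"
    have eD: "e \<in> D" if e: "0 < e" "e \<le> 1" for e
    proof -
      have epi: "e \<le> pi" using e pi_gt3 by simp
      have "cos e < cos 0" using e epi by (intro cos_monotone_0_pi) auto
      then have ce: "cos e < 1" by simp
      define r where "r = sqrt (2 - 2 * cos e)"
      have r: "r > 0" "r\<^sup>2 = 2 - 2 * cos e" using ce by (auto simp: r_def)
      have "\<exists>U. openin T U \<and> p \<in> U \<and> sphere_diam (Phi f ` U) \<le> e" if p: "p \<in> topspace T" for p
      proof -
        have "openin euclidean (ball (Phi f p) (r/2))" by simp
        moreover have "Phi f p \<in> ball (Phi f p) (r/2)" using r by simp
        ultimately obtain U where U: "openin T U" "p \<in> U" "\<forall>q\<in>U. Phi f q \<in> ball (Phi f p) (r/2)"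
          using cm_nbhd[of T "Phi f" p "ball (Phi f p) (r/2)"] c p by (auto simp: T_def)
        have "\<forall>q\<in>U. \<forall>q'\<in>U. arccos (inner (Phi f q) (Phi f q')) \<le> e"
        proof (intro ballI)
          fix q q' assume q: "q \<in> U" "q' \<in> U"
          have "norm (Phi f q - Phi f q') \<le> dist (Phi f p) (Phi f q) + dist (Phi f p) (Phi f q')"
            using dist_triangle3[of "Phi f q" "Phi f q'" "Phi f p"] by (simp only: dist_norm)
          also have "\<dots> < r"
          proof -
            have "dist (Phi f p) (Phi f q) < r/2" "dist (Phi f p) (Phi f q') < r/2" using U(3) q by auto
            then show ?thesis by linarith
          qed
          finally have n1: "norm (Phi f q - Phi f q') \<le> r" by simp
          have "(norm (Phi f q - Phi f q'))\<^sup>2 \<le> r\<^sup>2"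
            using power_mono[OF n1 norm_ge_zero, of 2] .
          moreover have "q \<in> topspace T" "q' \<in> topspace T" using U q openin_subset by auto
          ultimately show "arccos (inner (Phi f q) (Phi f q')) \<le> e"
            using arccos_small_iff[OF unit unit, of q q' e] e epi r by simp
        qed
        then show ?thesis using U diam[OF U(1)] by blast
      qed
      then show ?thesis unfolding D_def using e by auto
    qed
    have "Inf D \<le> 0"
    proof (rule ccontr)
      assume "\<not> Inf D \<le> 0"
      then have "min (Inf D / 2) 1 \<in> D" by (intro eD) auto
      then have "Inf D \<le> min (Inf D / 2) 1" using bdd by (rule cInf_lower)
      then show False using \<open>\<not> Inf D \<le> 0\<close> by linarith
    qed
    then show "alpha X f = 0" using D0 alpha by simp
  qed
qed


lemma recover:
  fixes p a b :: "'b::real_inner"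
  assumes "p \<noteq> a" "p \<noteq> b"
  defines "u \<equiv> (p - a) /\<^sub>R norm (p - a)" and "v \<equiv> (p - b) /\<^sub>R norm (p - b)"
  assumes c2: "(inner u v)\<^sup>2 \<noteq> 1"
  shows "p = a + ((inner (b - a) u - inner u v * inner (b - a) v) / (1 - (inner u v)\<^sup>2)) *\<^sub>R u"
proof -
  define A where "A = norm (p - a)"
  define B where "B = norm (p - b)"
  define c where "c = inner u v"
  have A: "A > 0" "p - a = A *\<^sub>R u" using assms(1) by (auto simp: A_def u_def)
  have B: "B > 0" "p - b = B *\<^sub>R v" using assms(2) by (auto simp: B_def v_def)
  have "norm u = 1" using assms(1) by (simp add: u_def)
  then have uu: "inner u u = 1" by (metis power2_norm_eq_inner one_power2)
  have "norm v = 1" using assms(2) by (simp add: v_def)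
  then have vv: "inner v v = 1" by (metis power2_norm_eq_inner one_power2)
  have w: "b - a = A *\<^sub>R u - B *\<^sub>R v" using A B by (simp add: algebra_simps)
  have wu: "inner (b - a) u = A - B * c" unfolding w using uu by (simp add: inner_diff_left inner_diff_right c_def inner_commute)
  have wv: "inner (b - a) v = A * c - B" unfolding w using vv by (simp add: inner_diff_left inner_diff_right c_def inner_commute)
  have "inner (b - a) u - c * inner (b - a) v = A * (1 - c\<^sup>2)"
    unfolding wu wv by (simp add: algebra_simps power2_eq_square)
  moreover have "1 - c\<^sup>2 \<noteq> 0" using c2 by (simp add: c_def)
  ultimately have "(inner (b - a) u - c * inner (b - a) v) / (1 - c\<^sup>2) = A" by simp
  then show ?thesis using A(2) by (simp add: c_def algebra_simps)
qed


lemma col_contra: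
  fixes f :: "'a \<Rightarrow> 'b::euclidean_space"
  assumes nc: "\<not> collinear (f ` S)" and x0: "x0 \<in> S"
    and h: "\<And>z. z \<in> S \<Longrightarrow> \<exists>k. f z - f x0 = k *\<^sub>R d"
  shows False
proof -
  have "\<forall>p\<in>f ` S. \<exists>c. p = f x0 + c *\<^sub>R d"
  proof
    fix p assume "p \<in> f ` S"
    then obtain z where z: "z \<in> S" "p = f z" by auto
    then obtain k where "f z - f x0 = k *\<^sub>R d" using h by blast
    then show "\<exists>c. p = f x0 + c *\<^sub>R d" using z by (metis add.commute diff_add_cancel)
  qed
  then have "collinear (f ` S)" unfolding collinear_alt by blast
  then show False using nc by simp
qed

lemma pair_cont:
  fixes f :: "'a \<Rightarrow> 'b::euclidean_space"
  assumes c: "continuous_map (conf2 X) euclidean (Phi f)"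
    and y: "y \<in> topspace X" and A: "y \<notin> A"
  shows "continuous_map (subtopology X A) euclidean (\<lambda>x. Phi f (x, y))"
proof -
  have "continuous_map (subtopology X A) (conf2 X) (\<lambda>x. (x, y))"
    unfolding conf2_def
  proof (rule continuous_map_into_subtopology)
    show "continuous_map (subtopology X A) (prod_topology X X) (\<lambda>x. (x, y))"
      using y by (intro continuous_map_pairedI continuous_map_from_subtopology continuous_map_id) auto
    show "(\<lambda>x. (x, y)) \<in> topspace (subtopology X A) \<rightarrow> {(x, y). x \<noteq> y}" using A by auto
  qed
  then show ?thesis using continuous_map_compose[OF _ c] by (simp add: o_def)
qed

lemma sep:
  fixes f :: "'a \<Rightarrow> 'b::euclidean_space"
  assumes inj: "inj_on f (topspace X)" and nc: "\<not> collinear (f ` topspace X)"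
    and c: "continuous_map (conf2 X) euclidean (Phi f)"
    and x0: "x0 \<in> topspace X" and y: "y \<in> topspace X" and ne: "x0 \<noteq> y"
  shows "\<exists>W. openin X W \<and> x0 \<in> W \<and> y \<notin> W"
proof (rule ccontr)
  assume "\<not> ?thesis"
  then have H: "\<And>W. openin X W \<Longrightarrow> x0 \<in> W \<Longrightarrow> y \<in> W" by blast
  have eq: "Phi f (y, z) = Phi f (x0, z)" if z: "z \<in> topspace X" "z \<noteq> x0" "z \<noteq> y" for z
  proof (rule ccontr)
    assume "Phi f (y, z) \<noteq> Phi f (x0, z)"
    then have e: "dist (Phi f (x0, z)) (Phi f (y, z)) > 0" by simp
    have "(x0, z) \<in> topspace (conf2 X)" using x0 z by (simp add: topspace_conf2)
    moreover have "openin euclidean (ball (Phi f (x0, z)) (dist (Phi f (x0, z)) (Phi f (y, z))))" by simp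
    moreover have "Phi f (x0, z) \<in> ball (Phi f (x0, z)) (dist (Phi f (x0, z)) (Phi f (y, z)))" using e by simp
    ultimately obtain U where U: "openin (conf2 X) U" "(x0, z) \<in> U"
      "\<forall>q\<in>U. Phi f q \<in> ball (Phi f (x0, z)) (dist (Phi f (x0, z)) (Phi f (y, z)))"
      using cm_nbhd[OF c, of "(x0, z)" "ball (Phi f (x0, z)) (dist (Phi f (x0, z)) (Phi f (y, z)))"] e
        \<open>(x0, z) \<in> topspace (conf2 X)\<close> by auto
    obtain V where V: "openin (prod_topology X X) V" "U = V \<inter> {(a, b). a \<noteq> b}"
      using U(1) unfolding conf2_def openin_subtopology by blast
    obtain A B where AB: "openin X A" "openin X B" "x0 \<in> A" "z \<in> B" "A \<times> B \<subseteq> V"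
    proof -
      have x0zV: "(x0, z) \<in> V" using V(2) U(2) by blast
      have "\<forall>a b. (a, b) \<in> V \<longrightarrow> (\<exists>A B. openin X A \<and> openin X B \<and> a \<in> A \<and> b \<in> B \<and> A \<times> B \<subseteq> V)"
        using V(1) by (simp only: openin_prod_topology_alt)
      then show ?thesis using x0zV that by blast
    qed
    have "y \<in> A" using H AB by blast
    then have "(y, z) \<in> U" using AB V z by auto
    then show False using U(3) by auto
  qed
  define d where "d = f y - f x0"
  have "\<exists>k. f z - f x0 = k *\<^sub>R d" if z: "z \<in> topspace X" for z
  proof (cases "z = x0 \<or> z = y")
    case True
    then show ?thesis by (auto simp: d_def intro: exI[of _ 0] exI[of _ 1])
  next
    case False
    then have zz: "z \<noteq> x0" "z \<noteq> y" by auto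
    have fy: "f y \<noteq> f z" and f0: "f x0 \<noteq> f z" and fy0: "f y \<noteq> f x0"
      using inj z x0 y zz ne by (auto dest: inj_onD)
    define ny where "ny = norm (f y - f z)"
    define n0 where "n0 = norm (f x0 - f z)"
    have pos: "ny > 0" "n0 > 0" using fy f0 by (auto simp: ny_def n0_def)
    have "(f y - f z) /\<^sub>R ny = (f x0 - f z) /\<^sub>R n0"
      using eq[OF z zz] by (simp add: Phi_def ny_def n0_def)
    then have k: "f y - f z = (ny / n0) *\<^sub>R (f x0 - f z)"
    proof -
      have "f y - f z = ny *\<^sub>R ((f y - f z) /\<^sub>R ny)" using pos by simp
      also have "\<dots> = ny *\<^sub>R ((f x0 - f z) /\<^sub>R n0)" using \<open>(f y - f z) /\<^sub>R ny = (f x0 - f z) /\<^sub>R n0\<close> by simp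
      finally show ?thesis by (simp add: divide_inverse_commute)
    qed
    define k where "k = ny / n0"
    have "f y - f x0 = (1 - k) *\<^sub>R (f z - f x0)"
      using k by (simp add: k_def algebra_simps)
    moreover have "k \<noteq> 1" using fy0 calculation by auto
    ultimately have "f z - f x0 = (1 / (1 - k)) *\<^sub>R d" by (simp add: d_def)
    then show ?thesis by blast
  qed
  then show False using col_contra[OF nc x0] by blast
qed


lemma pick_pair:
  fixes f :: "'a \<Rightarrow> 'b::euclidean_space"
  assumes inj: "inj_on f (topspace X)" and nc: "\<not> collinear (f ` topspace X)"
    and x0: "x0 \<in> topspace X"
  shows "\<exists>y z. y \<in> topspace X \<and> z \<in> topspace X \<and> y \<noteq> x0 \<and> z \<noteq> x0 \<and>
     (inner (Phi f (x0, y)) (Phi f (x0, z)))\<^sup>2 \<noteq> 1"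
proof (rule ccontr)
  assume H0: "\<not> ?thesis"
  obtain y where y: "y \<in> topspace X" "y \<noteq> x0"
  proof (cases "\<exists>y\<in>topspace X. y \<noteq> x0")
    case True then show ?thesis using that by blast
  next
    case False
    then have "\<And>z. z \<in> topspace X \<Longrightarrow> \<exists>k. f z - f x0 = k *\<^sub>R 0" by auto
    then show ?thesis using col_contra[OF nc x0] by blast
  qed
  define u where "u = Phi f (x0, y)"
  define ny where "ny = norm (f x0 - f y)"
  have fy: "f x0 \<noteq> f y" using inj x0 y by (auto dest: inj_onD)
  have ny: "ny > 0" "f x0 - f y = ny *\<^sub>R u" using fy by (auto simp: ny_def u_def Phi_def)
  have nu: "norm u = 1" using fy by (simp add: u_def Phi_def)
  have "\<exists>k. f z - f x0 = k *\<^sub>R (f y - f x0)" if z: "z \<in> topspace X" for z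
  proof (cases "z = x0")
    case True then show ?thesis by (auto intro: exI[of _ 0])
  next
    case False
    define v where "v = Phi f (x0, z)"
    define nz where "nz = norm (f x0 - f z)"
    have fz: "f x0 \<noteq> f z" using inj x0 z False by (auto dest: inj_onD)
    have nz: "f x0 - f z = nz *\<^sub>R v" using fz by (auto simp: nz_def v_def Phi_def)
    have nv: "norm v = 1" using fz by (simp add: v_def Phi_def)
    have "(inner u v)\<^sup>2 = 1" using H0 y z False by (auto simp: u_def v_def)
    then have "inner u v = 1 \<or> inner u v = -1" by (simp add: power2_eq_1_iff)
    then obtain s where s: "v = s *\<^sub>R u"
    proof
      assume "inner u v = 1"
      then have "(norm (u - v))\<^sup>2 = 0" using unit_dist_sq[OF nu nv] by simp
      then have "v = 1 *\<^sub>R u" by simp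
      then show ?thesis using that by blast
    next
      assume "inner u v = -1"
      have nv': "norm (- v) = 1" using nv by simp
      have "(norm (u - - v))\<^sup>2 = 0" using unit_dist_sq[OF nu nv'] \<open>inner u v = -1\<close> by simp
      then have "v = (-1) *\<^sub>R u" by (simp add: eq_neg_iff_add_eq_0 add.commute)
      then show ?thesis using that by blast
    qed
    have "f z - f x0 = (nz * s / ny) *\<^sub>R (f y - f x0)"
    proof -
      have "f z - f x0 = - (nz * s) *\<^sub>R u" using nz s by (simp add: algebra_simps)
      also have "u = (1 / ny) *\<^sub>R (f x0 - f y)" using ny by simp
      finally show ?thesis by (simp add: algebra_simps)
    qed
    then show ?thesis by blast
  qed
  then show False using col_contra[OF nc x0] by blast
qed


lemma local_cont:
  fixes f :: "'a \<Rightarrow> 'b::euclidean_space"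
  assumes inj: "inj_on f (topspace X)" and nc: "\<not> collinear (f ` topspace X)"
    and c: "continuous_map (conf2 X) euclidean (Phi f)"
    and x0: "x0 \<in> topspace X"
  shows "\<exists>W. openin X W \<and> x0 \<in> W \<and> continuous_map (subtopology X W) euclidean f"
proof -
  obtain y z where yz: "y \<in> topspace X" "z \<in> topspace X" "y \<noteq> x0" "z \<noteq> x0"
    and c0: "(inner (Phi f (x0, y)) (Phi f (x0, z)))\<^sup>2 \<noteq> 1"
    using pick_pair[OF inj nc x0] by blast
  obtain W1 where W1: "openin X W1" "x0 \<in> W1" "y \<notin> W1" using sep[OF inj nc c x0 yz(1)] yz by metis
  obtain W2 where W2: "openin X W2" "x0 \<in> W2" "z \<notin> W2" using sep[OF inj nc c x0 yz(2)] yz by metis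
  define W where "W = W1 \<inter> W2"
  have W: "openin X W" "x0 \<in> W" "y \<notin> W" "z \<notin> W" using W1 W2 by (auto simp: W_def)
  define u where "u x = Phi f (x, y)" for x
  define v where "v x = Phi f (x, z)" for x
  define cc where "cc x = inner (u x) (v x)" for x
  have ccW: "continuous_map (subtopology X W) euclidean (\<lambda>x. (cc x)\<^sup>2)"
    unfolding cc_def u_def v_def
    by (intro continuous_intros pair_cont[OF c yz(1) W(3)] pair_cont[OF c yz(2) W(4)])
  define W' where "W' = {x \<in> topspace (subtopology X W). (cc x)\<^sup>2 \<in> - {1}}"
  have "openin (subtopology X W) W'"
    unfolding W'_def by (rule openin_continuous_map_preimage[OF ccW]) auto
  then have oW': "openin X W'" using W(1) by (rule openin_trans_full)
  have W'sub: "W' \<subseteq> W" using W(1) openin_subset by (auto simp: W'_def)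
  have x0W': "x0 \<in> W'" using W x0 c0 by (auto simp: W'_def cc_def u_def v_def)
  have yW': "y \<notin> W'" and zW': "z \<notin> W'" using W'sub W by auto
  define g where "g x = f y + ((inner (f z - f y) (u x) - cc x * inner (f z - f y) (v x)) / (1 - (cc x)\<^sup>2)) *\<^sub>R u x" for x
  have gc: "continuous_map (subtopology X W') euclidean g"
    unfolding g_def cc_def u_def v_def
  proof (intro continuous_intros pair_cont[OF c yz(1) yW'] pair_cont[OF c yz(2) zW'])
    fix x assume "x \<in> topspace (subtopology X W')"
    then have "x \<in> W'" by auto
    then show "1 - (Phi f (x, y) \<bullet> Phi f (x, z))\<^sup>2 \<noteq> 0"
      by (auto simp: W'_def cc_def u_def v_def)
  qed auto
  have "continuous_map (subtopology X W') euclidean f"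
  proof (rule continuous_map_eq[OF gc])
    fix x assume "x \<in> topspace (subtopology X W')"
    then have x: "x \<in> W'" "x \<in> topspace X" by auto
    then have xy: "x \<noteq> y" "x \<noteq> z" using yW' zW' by auto
    have "f x \<noteq> f y" "f x \<noteq> f z" using inj x yz xy by (auto dest: inj_onD)
    moreover have "(cc x)\<^sup>2 \<noteq> 1" using x by (auto simp: W'_def)
    ultimately show "g x = f x"
      unfolding g_def using recover[of "f x" "f y" "f z"]
      by (simp add: cc_def u_def v_def Phi_def)
  qed
  then show ?thesis using oW' x0W' by blast
qed

lemma glue:
  assumes "\<And>x. x \<in> topspace X \<Longrightarrow> \<exists>W. openin X W \<and> x \<in> W \<and> continuous_map (subtopology X W) Y f"
  shows "continuous_map X Y f"
  unfolding continuous_map_eq_topcontinuous_at topcontinuous_at_def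
proof (intro ballI conjI allI impI)
  fix x assume x: "x \<in> topspace X"
  then obtain W where W: "openin X W" "x \<in> W" "continuous_map (subtopology X W) Y f" using assms by blast
  show "x \<in> topspace X" using x .
  show "f \<in> topspace X \<rightarrow> topspace Y"
  proof
    fix z assume z: "z \<in> topspace X"
    then obtain Wz where "openin X Wz" "z \<in> Wz" "continuous_map (subtopology X Wz) Y f" using assms by blast
    then show "f z \<in> topspace Y" using z by (auto simp: continuous_map_def)
  qed
  fix V assume V: "openin Y V \<and> f x \<in> V"
  have "openin (subtopology X W) {z \<in> topspace (subtopology X W). f z \<in> V}"
    using W(3) V by (intro openin_continuous_map_preimage) auto
  then have "openin X {z \<in> topspace (subtopology X W). f z \<in> V}" using W(1) by (rule openin_trans_full)
  moreover have "x \<in> {z \<in> topspace (subtopology X W). f z \<in> V}" using x W V by auto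
  ultimately show "\<exists>U. openin X U \<and> x \<in> U \<and> (\<forall>y\<in>U. f y \<in> V)" by blast
qed

theorem theorem3p7:
  fixes X :: "'a topology" and f :: "'a \<Rightarrow> 'b::euclidean_space"
  assumes "inj_on f (topspace X)"
    and "\<not> collinear (f ` topspace X)"
  shows "alpha X f = 0 \<longleftrightarrow> continuous_map X euclidean f"
proof -
  have "continuous_map (conf2 X) euclidean (Phi f) \<longleftrightarrow> continuous_map X euclidean f"
  proof
    assume c: "continuous_map (conf2 X) euclidean (Phi f)"
    show "continuous_map X euclidean f"
      by (rule glue) (rule local_cont[OF assms c])
  next
    assume cf: "continuous_map X euclidean f"
    have fst: "continuous_map (conf2 X) euclidean (\<lambda>p. f (fst p))"
      using continuous_map_compose[OF continuous_map_from_subtopology[OF continuous_map_fst] cf]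
      by (simp add: conf2_def o_def)
    have snd: "continuous_map (conf2 X) euclidean (\<lambda>p. f (snd p))"
      using continuous_map_compose[OF continuous_map_from_subtopology[OF continuous_map_snd] cf]
      by (simp add: conf2_def o_def)
    show "continuous_map (conf2 X) euclidean (Phi f)"
      unfolding Phi_def
    proof (intro continuous_intros fst snd)
      fix p assume "p \<in> topspace (conf2 X)"
      then have "fst p \<in> topspace X" "snd p \<in> topspace X" "fst p \<noteq> snd p"
        by (auto simp: topspace_conf2)
      then have "f (fst p) \<noteq> f (snd p)" using assms(1) by (auto dest: inj_onD)
      then show "norm (f (fst p) - f (snd p)) \<noteq> 0" by simp
    qed
  qed
  then show ?thesis using alpha_zero_iff[OF assms(1)] by simp
qed

end
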